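(* Let $N\ge 1$ be an integer and let $\mathcal S=(\mathbf s^0,\dots,\mathbf s^{M-1})$ be an $(M,1,\mathbb L)$-$N$-CO-SF in which every sequence $\mathbf s^m$ is nonzero. Then $M\le N$. Moreover, this bound is attainable: for every $N\ge1$ there exists an $(N,1,\mathbb L)$-$N$-CO-SF consisting of nonzero sequences.
   Context: All sequences are finite complex sequences. A sequence $\mathbf s=(s_0,\dots,s_{L-1})$ of length $L$ is identified with the function $s:\mathbb Z\to\mathbb C$ given by $s(n)=s_n$ for $0\le n<L$ and $s(n)=0$ otherwise. For sequences $\mathbf s,\mathbf s'$ of lengths $L,L'$ (possibly different), the aperiodic correlation is $R_{\mathbf s,\mathbf s'}(\tau)=\sum_{l=0}^{L-1}s(l)\,\overline{s'(l+\tau)}$ for $\tau\in\mathbb Z$. The energy of $\mathbf s$ is $E_{\mathbf s}=R_{\mathbf s,\mathbf s}(0)$. An $(M,1,\mathbb L)$-$N$-shift cross-orthogonal sequence family ($N$-CO-SF) is an indexed family $(\mathbf s^0,\dots,\mathbf s^{M-1})$ of complex sequences, where $\mathbf s^m$ has length $L^{(m)}$ divisible by $N$, and $\mathbb L$ is the set of distinct values among $L^{(0)},\dots,L^{(M-1)}$, such that for all $0\le m,m'<M$ and all $k\in\mathbb Z$, $R_{\mathbf s^m,\mathbf s^{m'}}(kN)=E_{\mathbf s^m}\,\delta(m-m')\,\delta(k)$, where $\delta$ is the Kronecker delta ($\delta(0)=1$, $\delta(x)=0$ for $x\neq0$). *)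

theory Defs
  imports Complex_Main
begin

definition seqfun :: "complex list \<Rightarrow> int \<Rightarrow> complex" where
  "seqfun s n = (if 0 \<le> n \<and> n < int (length s) then s ! nat n else 0)"

definition acorr :: "complex list \<Rightarrow> complex list \<Rightarrow> int \<Rightarrow> complex" where
  "acorr s s' \<tau> = (\<Sum>l<length s. seqfun s (int l) * cnj (seqfun s' (int l + \<tau>)))"

definition energy :: "complex list \<Rightarrow> complex" where
  "energy s = acorr s s 0"

text \<open>An (M,1,L)-N-shift cross-orthogonal sequence family, M = length S,
  L = set of the lengths (determined by the family).\<close>
definition is_N_CO_SF :: "nat \<Rightarrow> complex list list \<Rightarrow> bool" where
  "is_N_CO_SF N S \<longleftrightarrow>
     (\<forall>m < length S. N dvd length (S ! m)) \<and>
     (\<forall>m < length S. \<forall>m' < length S. \<forall>k::int.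
        acorr (S ! m) (S ! m') (k * int N) =
          (if m = m' \<and> k = 0 then energy (S ! m) else 0))"

definition nonzero_seq :: "complex list \<Rightarrow> bool" where
  "nonzero_seq s \<longleftrightarrow> (\<exists>x \<in> set s. x \<noteq> 0)"

end

theory Submission imports Defs "HOL-Library.Function_Algebras" begin

definition ipW :: "nat \<Rightarrow> (nat \<Rightarrow> complex) \<Rightarrow> (nat \<Rightarrow> complex) \<Rightarrow> complex" where
  "ipW W f g = (\<Sum>i<W. f i * cnj (g i))"

lemma sum_fun_apply: "finite A \<Longrightarrow> (\<Sum>x\<in>A. (F x :: nat \<Rightarrow> complex)) j = (\<Sum>x\<in>A. F x j)"
  by (induction A rule: finite_induct) auto

interpretation FV: vector_space "\<lambda>(c::complex) (f::nat \<Rightarrow> complex). (\<lambda>i. c * f i)"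
  by unfold_locales (auto simp: fun_eq_iff algebra_simps)

lemma orth_card:
  fixes A :: "(nat \<Rightarrow> complex) set"
  assumes fin: "finite A"
    and supp: "\<And>y i. y \<in> A \<Longrightarrow> i \<ge> W \<Longrightarrow> y i = 0"
    and orth: "\<And>x y. x \<in> A \<Longrightarrow> y \<in> A \<Longrightarrow> x \<noteq> y \<Longrightarrow> ipW W y x = 0"
    and nz: "\<And>x. x \<in> A \<Longrightarrow> ipW W x x \<noteq> 0"
  shows "card A \<le> W"
proof -
  define e where "e = (\<lambda>i::nat. (\<lambda>j::nat. if j = i then (1::complex) else 0))"
  have ind: "FV.independent A"
  proof (rule FV.independent_if_scalars_zero[OF fin])
    fix f x assume s: "(\<Sum>x\<in>A. (\<lambda>i. f x * x i)) = 0" and x: "x \<in> A"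
    have pt: "\<And>i. (\<Sum>y\<in>A. f y * y i) = 0"
      using s sum_fun_apply[OF fin, of "\<lambda>y i. f y * y i"] by (metis zero_fun_def)
    have "0 = (\<Sum>i<W. (\<Sum>y\<in>A. f y * y i) * cnj (x i))" using pt by simp
    also have "\<dots> = (\<Sum>y\<in>A. f y * ipW W y x)"
      unfolding ipW_def by (simp add: sum_distrib_left sum_distrib_right sum.swap[of _ A] mult.assoc)
    also have "\<dots> = f x * ipW W x x"
    proof -
      have "(\<Sum>y\<in>A-{x}. f y * ipW W y x) = 0"
      proof (rule sum.neutral, rule ballI)
        fix y assume "y \<in> A-{x}"
        thus "f y * ipW W y x = 0" using orth[of x y] x by auto
      qed
      thus ?thesis by (simp add: sum.remove[OF fin x])
    qed
    finally show "f x = 0" using nz[OF x] by simp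
  qed
  have sp: "A \<subseteq> FV.span (e ` {..<W})"
  proof
    fix y assume y: "y \<in> A"
    have "y = (\<Sum>i\<in>{..<W}. (\<lambda>j. y i * e i j))"
    proof
      fix j
      show "y j = (\<Sum>i\<in>{..<W}. (\<lambda>j. y i * e i j)) j"
      proof -
        have "(\<Sum>i\<in>{..<W}. (\<lambda>j. y i * e i j)) j = (\<Sum>i<W. if j = i then y i else 0)"
          unfolding sum_fun_apply[OF finite_lessThan] e_def by (rule sum.cong) auto
        also have "\<dots> = y j" using supp[OF y, of j] by (simp add: sum.delta)
        finally show ?thesis by simp
      qed
    qed
    also have "\<dots> \<in> FV.span (e ` {..<W})"
      by (intro FV.span_sum FV.span_scale FV.span_base) auto
    finally show "y \<in> FV.span (e ` {..<W})" .
  qed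
  have "card A \<le> card (e ` {..<W})"
    using FV.independent_span_bound[OF _ ind sp] by auto
  also have "\<dots> \<le> W" using card_image_le[of "{..<W}" e] by simp
  finally show ?thesis .
qed

lemma seqfun_out: "n < 0 \<or> n \<ge> int (length s) \<Longrightarrow> seqfun s n = 0"
  unfolding seqfun_def by auto

lemma energy_nz:
  assumes "nonzero_seq s" shows "energy s \<noteq> 0"
proof -
  obtain j where j: "j < length s" "s ! j \<noteq> 0"
    using assms unfolding nonzero_seq_def by (auto simp: in_set_conv_nth)
  have e: "energy s = of_real (\<Sum>l<length s. (cmod (s ! l))^2)"
    unfolding energy_def acorr_def seqfun_def
    by (simp add: complex_norm_square[symmetric] of_real_sum)
  have "(\<Sum>l<length s. (cmod (s ! l))^2) > 0"
  proof (rule sum_pos2[of "{..<length s}" j])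
  qed (use j in auto)
  thus ?thesis using e by (metis less_irrefl of_real_eq_0_iff)
qed

lemma ipW_acorr:
  fixes s s' :: "complex list" and k k' N W :: nat
  assumes "k * N + length s \<le> W"
  shows "ipW W (\<lambda>i. seqfun s (int i - int (k*N))) (\<lambda>i. seqfun s' (int i - int (k'*N)))
       = acorr s s' ((int k - int k') * int N)"
proof -
  let ?g = "\<lambda>i. seqfun s (int i - int (k*N)) * cnj (seqfun s' (int i - int (k'*N)))"
  have "ipW W (\<lambda>i. seqfun s (int i - int (k*N))) (\<lambda>i. seqfun s' (int i - int (k'*N)))
      = (\<Sum>i<W. ?g i)" unfolding ipW_def by simp
  also have "\<dots> = (\<Sum>i\<in>{k*N..<k*N + length s}. ?g i)"
  proof -
    have zero: "?g i = 0" if "i \<in> {..<W} - {k*N..<k*N + length s}" for i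
    proof -
      from that have "int i - int (k*N) < 0 \<or> int i - int (k*N) \<ge> int (length s)" by (auto simp del: of_nat_mult)
      thus "?g i = 0" by (simp only: seqfun_out) simp
    qed
    show ?thesis by (rule sum.mono_neutral_right) (use assms zero in auto)
  qed
  also have "\<dots> = (\<Sum>l<length s. ?g (l + k*N))"
    using sum.shift_bounds_nat_ivl[of ?g 0 "k*N" "length s"]
    by (simp add: lessThan_atLeast0 add.commute)
  also have "\<dots> = acorr s s' ((int k - int k') * int N)"
    unfolding acorr_def by (rule sum.cong) (auto simp: algebra_simps)
  finally show ?thesis .
qed


lemma upper:
  fixes N :: nat and S :: "complex list list"
  assumes N: "N \<ge> 1" and co: "is_N_CO_SF N S" and nz: "\<forall>m < length S. nonzero_seq (S ! m)"
  shows "length S \<le> N"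
proof -
  define M where "M = length S"
  define c where "c m = length (S ! m) div N" for m
  define K where "K = (\<Sum>m<M. c m)"
  define v where "v = (\<lambda>(m, k). (\<lambda>i::nat. seqfun (S ! m) (int i - int (k*N))))"
  define I where "I = Sigma {..<M} (\<lambda>m. {..K - c m})"
  have dvd: "\<And>m. m < M \<Longrightarrow> N dvd length (S ! m)" using co unfolding is_N_CO_SF_def M_def by auto
  have len: "\<And>m. m < M \<Longrightarrow> length (S ! m) = c m * N" using dvd unfolding c_def by auto
  have cK: "\<And>m. m < M \<Longrightarrow> c m \<le> K" unfolding K_def
    by (rule member_le_sum) auto
  have win: "\<And>m k. (m, k) \<in> I \<Longrightarrow> k * N + length (S ! m) \<le> K * N"
  proof -
    fix m k assume "(m, k) \<in> I"
    hence m: "m < M" and k: "k \<le> K - c m" unfolding I_def by auto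
    have "k * N + length (S ! m) = (k + c m) * N" using len[OF m] by (simp add: algebra_simps)
    also have "\<dots> \<le> K * N" using k cK[OF m] by (intro mult_le_mono1) simp
    finally show "k * N + length (S ! m) \<le> K * N" .
  qed
  have ip: "ipW (K*N) (v a) (v b) = acorr (S ! fst a) (S ! fst b) ((int (snd a) - int (snd b)) * int N)"
    if "a \<in> I" for a b
    using that win ipW_acorr unfolding v_def by (cases a; cases b) auto
  have ipval: "ipW (K*N) (v a) (v b) = (if a = b then energy (S ! fst a) else 0)"
    if "a \<in> I" "b \<in> I" for a b
  proof -
    have "fst a < M" "fst b < M" using that unfolding I_def by auto
    hence "acorr (S ! fst a) (S ! fst b) ((int (snd a) - int (snd b)) * int N)
        = (if fst a = fst b \<and> int (snd a) - int (snd b) = 0 then energy (S ! fst a) else 0)"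
      using co unfolding is_N_CO_SF_def M_def by blast
    also have "\<dots> = (if a = b then energy (S ! fst a) else 0)"
      by (cases a; cases b) auto
    finally show ?thesis using ip[OF that(1)] by simp
  qed
  have enz: "a \<in> I \<Longrightarrow> energy (S ! fst a) \<noteq> 0" for a
    using nz energy_nz unfolding I_def M_def by auto
  have inj: "inj_on v I"
  proof (rule inj_onI)
    fix a b assume a: "a \<in> I" and b: "b \<in> I" and e: "v a = v b"
    show "a = b"
    proof (rule ccontr)
      assume "a \<noteq> b"
      hence "ipW (K*N) (v a) (v b) = 0" using ipval[OF a b] by simp
      moreover have "ipW (K*N) (v a) (v b) \<noteq> 0" using e ipval[OF a a] enz[OF a] by simp
      ultimately show False by simp
    qed
  qed
  have finI: "finite I" unfolding I_def by auto
  have "card (v ` I) \<le> K * N"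
  proof (rule orth_card)
    show "finite (v ` I)" using finI by simp
  next
    fix y i assume "y \<in> v ` I" "K * N \<le> i"
    then obtain a where a: "a \<in> I" "y = v a" by auto
    obtain m k where mk: "a = (m, k)" by (cases a)
    have "k * N + length (S ! m) \<le> i" using win a mk \<open>K * N \<le> i\<close> by fastforce
    hence "int i - int (k*N) \<ge> int (length (S ! m))" by linarith
    hence "seqfun (S ! m) (int i - int (k*N)) = 0" by (intro seqfun_out) simp
    thus "y i = 0" using a mk unfolding v_def by simp
  next
    fix x y assume "x \<in> v ` I" "y \<in> v ` I" "x \<noteq> y"
    thus "ipW (K * N) y x = 0" using ipval by auto
  next
    fix x assume "x \<in> v ` I"
    thus "ipW (K * N) x x \<noteq> 0" using ipval enz by auto
  qed
  hence cardI: "card I \<le> K * N" using card_image[OF inj] by simp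
  have "card I = (\<Sum>m<M. K - c m + 1)" unfolding I_def by (simp add: card_SigmaI)
  hence "card I + K = (\<Sum>m<M. K - c m + 1 + c m)"
    by (simp only: sum.distrib) (simp add: K_def)
  also have "\<dots> = (\<Sum>m<M. K + 1)" using cK by (intro sum.cong) auto
  finally have "card I + K = M * (K + 1)" by simp
  with cardI have A: "M * (K + 1) \<le> (N + 1) * K" by (simp add: algebra_simps)
  show ?thesis
  proof (rule ccontr)
    assume "\<not> length S \<le> N"
    hence "N + 1 \<le> M" unfolding M_def by simp
    hence "(N + 1) * (K + 1) \<le> M * (K + 1)" by (rule mult_le_mono1)
    with A show False by (simp add: algebra_simps)
  qed
qed


lemma existence:
  fixes N :: nat
  shows "\<exists>S. length S = N \<and> is_N_CO_SF N S \<and> (\<forall>m < length S. nonzero_seq (S ! m))"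
proof -
  define e where "e m = map (\<lambda>i. if i = m then (1::complex) else 0) [0..<N]" for m :: nat
  define S where "S = map e [0..<N]"
  have sf: "seqfun (e m) (int l) = (if l = m \<and> l < N then 1 else 0)" for m l
    unfolding seqfun_def e_def by auto
  have length_e_aux: "length (e m) = N" for m unfolding e_def by simp
  have ac: "acorr (e m) (e m') (k * int N) = (if m = m' \<and> k = 0 then 1 else 0)"
    if "m < N" "m' < N" for m m' k
  proof -
    have "acorr (e m) (e m') (k * int N) = (\<Sum>l<N. if l = m then cnj (seqfun (e m') (int l + k * int N)) else 0)"
      unfolding acorr_def by (rule sum.cong) (auto simp: sf length_e_aux)
    also have "\<dots> = cnj (seqfun (e m') (int m + k * int N))" using that by simp
    also have "\<dots> = (if m = m' \<and> k = 0 then 1 else 0)"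
    proof (cases "k = 0")
      case True thus ?thesis using sf[of m' m] that by simp
    next
      case False
      have "int m + k * int N < 0 \<or> int m + k * int N \<ge> int N"
      proof (cases "k > 0")
        case True
        hence "k * int N \<ge> int N" using that by (simp add: mult_le_cancel_right1)
        thus ?thesis by simp
      next
        case nf: False
        hence "k \<le> -1" using False by simp
        hence "k * int N \<le> - int N" using that by (metis mult_le_cancel_right1 mult_minus_left mult_1 of_nat_0_le_iff mult_right_mono)
        thus ?thesis using that by simp
      qed
      hence "seqfun (e m') (int m + k * int N) = 0"
        by (intro seqfun_out) (simp add: e_def)
      thus ?thesis using False by simp
    qed
    finally show ?thesis .
  qed
  have en: "energy (e m) = 1" if "m < N" for m
    unfolding energy_def using ac[OF that that, of 0] by simp
  have "is_N_CO_SF N S"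
    unfolding is_N_CO_SF_def S_def using ac en by (auto simp: e_def)
  moreover have "\<forall>m < length S. nonzero_seq (S ! m)"
    unfolding S_def nonzero_seq_def e_def by (auto simp: in_set_conv_nth intro!: exI[of _ m] bexI[of _ 1])
  ultimately show ?thesis by (intro exI[of _ S]) (simp add: S_def)
qed

theorem theorem1:
  fixes N :: nat
  assumes "N \<ge> 1"
  shows "(\<forall>S. is_N_CO_SF N S \<and> (\<forall>m < length S. nonzero_seq (S ! m)) \<longrightarrow> length S \<le> N)
         \<and> (\<exists>S. length S = N \<and> is_N_CO_SF N S \<and> (\<forall>m < length S. nonzero_seq (S ! m)))"
  using upper[OF assms] existence by blast

end
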